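(* Let $P,Q$ be distinct points of $D$ and let $v_1,v_2\in S^1$ be the endpoints of the chord through $P$ and $Q$, with $v_1$ closer to $P$ than to $Q$. For a point $R\in D$ the following are equivalent: (1) there exists $w\in S^1$ with $w\neq v_1,v_2$ such that $R$ is the intersection point of the line $v_1w_2$ and the line $v_2w_1$, where $w_1\in S^1$ is the intersection point of the line $wP$ with $S^1$ other than $w$, and $w_2\in S^1$ is the intersection point of the line $wQ$ with $S^1$ other than $w$; (2) $\delta(P,Q,R)=\frac{1}{2}\Delta_1'(P,Q)$.
   Context: $D$ is the open unit disk in $\mathbb R^2$ and $S^1$ its boundary circle. Regard $D$ as the Beltrami–Klein model (hyperbolic lines are chords). For distinct $P,Q\in D$ with chord endpoints $v_1,v_2\in S^1$, $d'(P,Q)=\tfrac12\left|\log\frac{|v_1Q||v_2P|}{|v_1P||v_2Q|}\right|$ (Euclidean lengths), $d'(P,P)=0$; $\Delta_n'(P,Q)=\log\frac{e^{n d'(P,Q)}+1}{e^{n d'(P,Q)}-1}$ for $n\in\mathbb Z_{>0}$; $\delta(P,Q,R)=\min\{d'(R,S): S \text{ on the chord through } P,Q\}$. *)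

theory Defs
  imports "HOL-Analysis.Analysis"
begin

text \<open>The plane R^2 is modelled by the type complex (Euclidean distance = dist = cmod of difference).\<close>

definition Disk :: "complex set" where
  "Disk = {z. cmod z < 1}"

definition Circle :: "complex set" where
  "Circle = {z. cmod z = 1}"

definition is_chord_ends :: "complex \<Rightarrow> complex \<Rightarrow> complex \<Rightarrow> complex \<Rightarrow> bool" where
  "is_chord_ends P Q v1 v2 \<longleftrightarrow> v1 \<in> Circle \<and> v2 \<in> Circle \<and> v1 \<noteq> v2 \<and>
      collinear {v1, v2, P} \<and> collinear {v1, v2, Q}"

definition chord_ends :: "complex \<Rightarrow> complex \<Rightarrow> complex \<times> complex" where
  "chord_ends P Q = (SOME (v1, v2). is_chord_ends P Q v1 v2)"

text \<open>The Klein-model distance d'.  The formula is invariant under swapping v1 and v2.\<close>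
definition kdist :: "complex \<Rightarrow> complex \<Rightarrow> real" where
  "kdist P Q = (if P = Q then 0 else
     (case chord_ends P Q of (v1, v2) \<Rightarrow>
        1/2 * \<bar>ln ((dist v1 Q * dist v2 P) / (dist v1 P * dist v2 Q))\<bar>))"

definition Delta' :: "nat \<Rightarrow> complex \<Rightarrow> complex \<Rightarrow> real" where
  "Delta' n P Q = ln ((exp (real n * kdist P Q) + 1) / (exp (real n * kdist P Q) - 1))"

definition delta :: "complex \<Rightarrow> complex \<Rightarrow> complex \<Rightarrow> real" where
  "delta P Q R = Inf (kdist R ` {S \<in> Disk. collinear {P, Q, S}})"

end

theory Submission
  imports Defs "HOL-Analysis.Analysis"
begin


lemma cnj_unit: "cmod a = 1 \<Longrightarrow> cnj a = 1 / a"
proof -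
  assume h: "cmod a = 1"
  have "a * cnj a = 1" using complex_norm_square[of a] h by simp
  moreover have "a \<noteq> 0" using h by auto
  ultimately show ?thesis by (simp add: field_simps)
qed

lemma coll_param:
  fixes a b z :: complex
  assumes "a \<noteq> b"
  shows "collinear {a,b,z} \<longleftrightarrow> (\<exists>u::real. z = a + of_real u * (b - a))"
proof -
  have "collinear {a,b,z} = collinear {b,z,a}" by (simp add: insert_commute)
  also have "\<dots> \<longleftrightarrow> (\<exists>u. z = u *\<^sub>R b + (1 - u) *\<^sub>R a)"
    using assms by (simp add: collinear_3_expand)
  also have "\<dots> \<longleftrightarrow> (\<exists>u::real. z = a + of_real u * (b - a))"
    by (simp add: scaleR_conv_of_real algebra_simps)
  finally show ?thesis .
qed

lemma real_of_cnj_eq: "cnj q = q \<Longrightarrow> q = of_real (Re q)"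
  by (metis Reals_cnj_iff complex_is_Real_iff of_real_Re)

lemma chord_eq:
  fixes a b z :: complex
  assumes a: "cmod a = 1" and b: "cmod b = 1" and ab: "a \<noteq> b"
  shows "collinear {a,b,z} \<longleftrightarrow> z + a*b*cnj z = a + b"
proof -
  have a0: "a \<noteq> 0" and b0: "b \<noteq> 0" using a b by auto
  have ca: "cnj a = 1/a" and cb: "cnj b = 1/b" using a b cnj_unit by auto
  show ?thesis
  proof
    assume "collinear {a,b,z}"
    then obtain u::real where z: "z = a + of_real u * (b - a)" using coll_param ab by blast
    have "cnj z = 1/a + of_real u * (1/b - 1/a)" using z ca cb by simp
    hence "a*b*cnj z = b + of_real u * (a - b)" using a0 b0 by (simp add: field_simps)
    with z have "z + a*b*cnj z = (a + of_real u * (b - a)) + (b + of_real u * (a - b))"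
      by (rule arg_cong2[where f="(+)"])
    then show "z + a*b*cnj z = a + b" by (simp add: algebra_simps)
  next
    assume h: "z + a*b*cnj z = a + b"
    define q where "q = (z - a)/(b - a)"
    have cz: "cnj z = (a + b - z)/(a*b)" using h a0 b0 by (simp add: field_simps)
    have "cnj q = (cnj z - cnj a)/(cnj b - cnj a)" unfolding q_def by simp
    also have "\<dots> = ((a + b - z)/(a*b) - 1/a)/(1/b - 1/a)" unfolding cz ca cb ..
    also have "\<dots> = q" unfolding q_def using a0 b0 ab
      by (simp add: field_simps)
    finally have "cnj q = q" .
    hence "q = of_real (Re q)" by (rule real_of_cnj_eq)
    moreover have "z = a + q * (b - a)" unfolding q_def using ab by simp
    ultimately show "collinear {a,b,z}" using coll_param ab by metis
  qed
qed

lemma no_tangent: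
  fixes u X :: complex
  assumes u: "cmod u = 1" and X: "cmod X < 1"
  shows "X + u*u*cnj X \<noteq> 2*u"
proof
  assume h: "X + u*u*cnj X = 2*u"
  have u0: "u \<noteq> 0" using u by auto
  define z where "z = X / u"
  have "cnj z = u * cnj X" unfolding z_def using cnj_unit[OF u] u0 by (simp add: field_simps)
  hence "z + cnj z = (X + u*u*cnj X)/u" using u0 unfolding z_def by (simp add: field_simps)
  hence "z + cnj z = 2" using h u0 by simp
  hence "Re (z + cnj z) = 2" by simp
  hence "Re z = 1" by simp
  moreover have "cmod z < 1" unfolding z_def using u X by (simp add: norm_divide)
  ultimately show False using abs_Re_le_cmod[of z] by simp
qed

definition sec :: "complex \<Rightarrow> complex \<Rightarrow> complex" where
  "sec u X = (u - X) / (u * cnj X - 1)"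

lemma sec_props:
  fixes u X :: complex
  assumes u: "cmod u = 1" and X: "cmod X < 1"
  shows "u * cnj X - 1 \<noteq> 0" "cmod (sec u X) = 1" "sec u X \<noteq> u" "collinear {u, X, sec u X}"
    "sec u X * (u * cnj X - 1) = u - X"
proof -
  have u0: "u \<noteq> 0" using u by auto
  have n: "cmod (u * cnj X) < 1" using u X by (simp add: norm_mult)
  show d: "u * cnj X - 1 \<noteq> 0" using n by auto
  have "u * cnj X - 1 = u * cnj (X - u)" using cnj_unit[OF u] u0 by (simp add: field_simps)
  hence "cmod (u * cnj X - 1) = cmod u * cmod (cnj (X - u))" by (simp only: norm_mult)
  hence "cmod (u * cnj X - 1) = cmod (u - X)" using u by (simp only: complex_mod_cnj norm_minus_commute)
  moreover have "u \<noteq> X" using u X by auto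
  ultimately show "cmod (sec u X) = 1" unfolding sec_def using d by (simp add: norm_divide)
  show e: "sec u X * (u * cnj X - 1) = u - X" unfolding sec_def using d by simp
  show ne: "sec u X \<noteq> u"
  proof
    assume "sec u X = u"
    with e have "X + u*u*cnj X = 2*u" by (simp add: algebra_simps)
    with no_tangent[OF u X] show False by simp
  qed
  have "collinear {u, sec u X, X}"
    using chord_eq[OF u \<open>cmod (sec u X) = 1\<close> ne[symmetric]] e by (simp add: algebra_simps)
  thus "collinear {u, X, sec u X}" by (simp add: insert_commute)
qed

lemma sec_unique:
  fixes u X y :: complex
  assumes u: "cmod u = 1" and X: "cmod X < 1" and y: "cmod y = 1" "y \<noteq> u"
    and c: "collinear {u, X, y}"
  shows "y = sec u X"
proof -
  have "collinear {u, y, X}" using c by (simp add: insert_commute)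
  hence "X + u*y*cnj X = u + y" using chord_eq[OF u y(1) y(2)[symmetric]] by simp
  hence "y * (u * cnj X - 1) = u - X" by (simp add: algebra_simps)
  thus ?thesis unfolding sec_def using sec_props(1)[OF u X] by (simp add: field_simps)
qed


lemma unit_comp: "cmod a = 1 \<Longrightarrow> Re a * Re a + Im a * Im a = 1"
  by (metis cmod_power2 power2_eq_square power_one)

lemma norm_sq_comp: "cmod z ^ 2 = Re z * Re z + Im z * Im z"
  by (metis cmod_power2 power2_eq_square)

lemma re_line:
  fixes a b :: complex and s t :: real
  assumes a: "cmod a = 1" and b: "cmod b = 1"
  shows "Re ((a + of_real s * (b - a)) * cnj (a + of_real t * (b - a))) =
     (1-s)*(1-t) + s*t + ((1-s)*t + s*(1-t)) * Re (a * cnj b)"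
  using unit_comp[OF a] unit_comp[OF b] by (simp add: algebra_simps) algebra

lemma dist_sq_unit:
  fixes a b :: complex
  assumes a: "cmod a = 1" and b: "cmod b = 1"
  shows "cmod (a - b) ^ 2 = 2 - 2 * Re (a * cnj b)"
  using unit_comp[OF a] unit_comp[OF b] by (simp add: norm_sq_comp algebra_simps)

lemma one_minus_norm_line:
  fixes a b :: complex and s :: real
  assumes a: "cmod a = 1" and b: "cmod b = 1"
  shows "1 - cmod (a + of_real s * (b - a)) ^ 2 = s * (1 - s) * cmod (a - b) ^ 2"
  using unit_comp[OF a] unit_comp[OF b] by (simp add: norm_sq_comp algebra_simps) algebra

lemma one_minus_re_line:
  fixes a b :: complex and s t :: real
  assumes a: "cmod a = 1" and b: "cmod b = 1"
  shows "1 - Re ((a + of_real s * (b - a)) * cnj (a + of_real t * (b - a))) = ((1-s)*t + s*(1-t)) * cmod (a - b) ^ 2 / 2"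
  using unit_comp[OF a] unit_comp[OF b] by (simp add: norm_sq_comp algebra_simps) algebra

lemma re_lin_right:
  fixes R a b :: complex and t :: real
  shows "Re (R * cnj (a + of_real t * (b - a))) = (1 - t) * Re (R * cnj a) + t * Re (R * cnj b)"
  by (simp add: algebra_simps)


definition Fk :: "complex \<Rightarrow> complex \<Rightarrow> complex \<Rightarrow> complex \<Rightarrow> real" where
  "Fk R S a b = 1/2 * \<bar>ln ((dist a S * dist b R) / (dist a R * dist b S))\<bar>"

lemma cosh_half_abs_ln:
  fixes X :: real assumes X: "X > 0"
  shows "cosh (1/2 * \<bar>ln X\<bar>) ^ 2 = ((X + 1/X)/2 + 1)/2"
proof -
  have "1/2 * \<bar>ln X\<bar> = \<bar>ln X / 2\<bar>" by simp
  hence e1: "cosh (1/2 * \<bar>ln X\<bar>) = cosh (ln X / 2)" by (simp only: cosh_real_abs)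
  have e2: "cosh (2 * (ln X / 2)) = 2 * cosh (ln X / 2) ^ 2 - 1" by (rule cosh_double_cosh)
  have "2 * (ln X / 2) = ln X" by simp
  hence e3: "cosh (2 * (ln X / 2)) = (X + inverse X)/2" using cosh_ln_real[OF X] by simp
  have "2 * cosh (ln X / 2) ^ 2 - 1 = (X + 1/X)/2" using e2 e3 by (simp add: inverse_eq_divide)
  hence "cosh (ln X / 2) ^ 2 = ((X + 1/X)/2 + 1)/2" by (simp add: field_simps)
  thus ?thesis unfolding e1 .
qed

lemma norm_scale_nonneg: "u \<ge> 0 \<Longrightarrow> cmod (of_real u * z) = u * cmod z"
  by (simp add: norm_mult)

lemma in_unit_param:
  fixes a b :: complex and s :: real
  assumes a: "cmod a = 1" and b: "cmod b = 1" and ab: "a \<noteq> b"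
    and R: "cmod (a + of_real s * (b - a)) < 1"
  shows "0 < s" "s < 1"
proof -
  have "0 < 1 - cmod (a + of_real s * (b - a)) ^ 2" using R
    by (simp add: power_less_one_iff)
  hence p: "0 < s * (1 - s) * cmod (a - b) ^ 2" using one_minus_norm_line[OF a b] by simp
  have "cmod (a - b) ^ 2 > 0" using ab by simp
  hence "s * (1 - s) > 0" using p by (simp add: zero_less_mult_iff)
  thus "0 < s" "s < 1" by (auto simp: zero_less_mult_iff)
qed

lemma Fk_cosh:
  fixes a b :: complex and s t :: real
  assumes a: "cmod a = 1" and b: "cmod b = 1" and ab: "a \<noteq> b"
    and R: "R = a + of_real s * (b - a)" and S: "S = a + of_real t * (b - a)"
    and RD: "cmod R < 1" and SD: "cmod S < 1" and RS: "R \<noteq> S"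
  shows "cosh (Fk R S a b) ^ 2 = (1 - Re (R * cnj S))^2 / ((1 - cmod R ^ 2) * (1 - cmod S ^ 2))"
proof -
  have "cmod (a + of_real s * (b - a)) < 1" using RD unfolding R .
  note s = in_unit_param[OF a b ab this]
  have "cmod (a + of_real t * (b - a)) < 1" using SD unfolding S .
  note t = in_unit_param[OF a b ab this]
  define c where "c = cmod (b - a)"
  have c: "c > 0" using ab unfolding c_def by simp
  have c2: "cmod (a - b) = c" unfolding c_def by (simp add: norm_minus_commute)
  have d1: "dist a S = t * c" unfolding dist_norm S c_def
  proof -
    have "a - (a + of_real t * (b - a)) = - (of_real t * (b - a))" by simp
    thus "cmod (a - (a + of_real t * (b - a))) = t * cmod (b - a)"
      using t norm_scale_nonneg[of t "b - a"] by (simp only: norm_minus_cancel)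
  qed
  have d2: "dist a R = s * c" unfolding dist_norm R c_def
  proof -
    have "a - (a + of_real s * (b - a)) = - (of_real s * (b - a))" by simp
    thus "cmod (a - (a + of_real s * (b - a))) = s * cmod (b - a)"
      using s norm_scale_nonneg[of s "b - a"] by (simp only: norm_minus_cancel)
  qed
  have d3: "dist b R = (1 - s) * c" unfolding dist_norm R c_def
  proof -
    have "b - (a + of_real s * (b - a)) = of_real (1 - s) * (b - a)" by (simp add: algebra_simps)
    thus "cmod (b - (a + of_real s * (b - a))) = (1 - s) * cmod (b - a)"
      using s norm_scale_nonneg[of "1-s" "b - a"] by simp
  qed
  have d4: "dist b S = (1 - t) * c" unfolding dist_norm S c_def
  proof -
    have "b - (a + of_real t * (b - a)) = of_real (1 - t) * (b - a)" by (simp add: algebra_simps)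
    thus "cmod (b - (a + of_real t * (b - a))) = (1 - t) * cmod (b - a)"
      using t norm_scale_nonneg[of "1-t" "b - a"] by simp
  qed
  define X where "X = (t * (1 - s)) / (s * (1 - t))"
  have X: "X > 0" unfolding X_def using s t by simp
  have "(dist a S * dist b R) / (dist a R * dist b S) = X"
  proof -
    have "s - s* t \<noteq> 0" "t - s* t \<noteq> 0" using s t by (auto simp: algebra_simps)
    thus ?thesis unfolding d1 d2 d3 d4 X_def using c by (simp add: field_simps)
  qed
  hence "cosh (Fk R S a b) ^ 2 = ((X + 1/X)/2 + 1)/2"
    unfolding Fk_def using cosh_half_abs_ln[OF X] by simp
  also have "\<dots> = (((1-s)* t + s* (1-t)) * c^2 / 2)^2 / ((s * (1 - s) * c^2) * (t * (1 - t) * c^2))"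
  proof -
    have nz: "s \<noteq> 0" "1 - s \<noteq> 0" "t \<noteq> 0" "1 - t \<noteq> 0" "c \<noteq> 0" using s t c by auto
    have gen: "\<And>s uu t vv c::real. s > 0 \<Longrightarrow> uu > 0 \<Longrightarrow> t > 0 \<Longrightarrow> vv > 0 \<Longrightarrow> c > 0 \<Longrightarrow>
      uu = 1 - s \<Longrightarrow> vv = 1 - t \<Longrightarrow>
      (((t* uu)/(s* vv) + 1/((t* uu)/(s* vv)))/2 + 1)/2 = ((uu* t + s* vv) * c^2 / 2)^2 / ((s * uu * c^2) * (t * vv * c^2))"
    proof -
      fix s uu t vv c :: real
      assume h: "s > 0" "uu > 0" "t > 0" "vv > 0" "c > 0" "uu = 1 - s" "vv = 1 - t"
      have "(((t* uu)/(s* vv) + 1/((t* uu)/(s* vv)))/2 + 1)/2 = (t* uu + s* vv)^2 / (4* s* uu* t* vv)"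
        using h(1-5) by (simp add: field_simps power2_eq_square)
      also have "\<dots> = ((uu* t + s* vv) * c^2 / 2)^2 / ((s * uu * c^2) * (t * vv * c^2))"
        using h(1-5) by (simp add: field_simps power2_eq_square)
      finally show "(((t* uu)/(s* vv) + 1/((t* uu)/(s* vv)))/2 + 1)/2 = ((uu* t + s* vv) * c^2 / 2)^2 / ((s * uu * c^2) * (t * vv * c^2))" .
    qed
    show ?thesis unfolding X_def using gen[of s "1-s" t "1-t" c] s t c by simp
  qed
  also have "\<dots> = (1 - Re (R * cnj S))^2 / ((1 - cmod R ^ 2) * (1 - cmod S ^ 2))"
    unfolding R S one_minus_re_line[OF a b] one_minus_norm_line[OF a b] c2 ..
  finally show ?thesis .
qed


lemma norm_line_sq:
  fixes R d :: complex and l :: real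
  shows "cmod (R + of_real l * d) ^ 2 = cmod R ^ 2 + l * (2 * Re (R * cnj d)) + l^2 * cmod d ^ 2"
  by (simp only: norm_sq_comp) (simp add: algebra_simps power2_eq_square)

lemma quad_root:
  fixes A B C l :: real
  assumes A: "A > 0" and D: "B^2 - 4*A*C \<ge> 0" and l: "l = (-B + e * sqrt (B^2 - 4*A*C)) / (2*A)"
    and e: "e^2 = 1"
  shows "C + l * B + l^2 * A = 0"
proof -
  have sq: "sqrt (B^2 - 4*A*C) ^ 2 = B^2 - 4*A*C" using D by simp
  have "4*A*(C + l * B + l^2 * A) = (2*A*l + B)^2 - (B^2 - 4*A*C)" by (simp add: algebra_simps power2_eq_square)
  also have "2*A*l + B = e * sqrt (B^2 - 4*A*C)" unfolding l using A by (simp add: field_simps)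
  also have "(e * sqrt (B^2 - 4*A*C))^2 = B^2 - 4*A*C" using e sq by (simp add: power_mult_distrib)
  finally have "4*A*(C + l * B + l^2 * A) = 0" by simp
  thus ?thesis using A by simp
qed

lemma chord_ends_exist:
  fixes R S :: complex
  assumes R: "cmod R < 1" and S: "cmod S < 1" and RS: "R \<noteq> S"
  shows "\<exists>a b. is_chord_ends R S a b"
proof -
  define d where "d = S - R"
  define A where "A = cmod d ^ 2"
  define B where "B = 2 * Re (R * cnj d)"
  define C where "C = cmod R ^ 2 - 1"
  have A: "A > 0" unfolding A_def d_def using RS by simp
  have C: "C < 0" unfolding C_def using R by (simp add: power_less_one_iff)
  have Dp: "B^2 - 4*A*C > 0" using A C by (smt (verit) mult_pos_neg zero_le_power2)
  define l1 where "l1 = (-B + (-1) * sqrt (B^2 - 4*A*C)) / (2*A)"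
  define l2 where "l2 = (-B + 1 * sqrt (B^2 - 4*A*C)) / (2*A)"
  have r1: "C + l1 * B + l1^2 * A = 0" using quad_root[OF A _ l1_def] Dp by simp
  have r2: "C + l2 * B + l2^2 * A = 0" using quad_root[OF A _ l2_def] Dp by simp
  define a where "a = R + of_real l1 * d"
  define b where "b = R + of_real l2 * d"
  have "cmod a ^ 2 = 1" unfolding a_def norm_line_sq using r1 unfolding A_def B_def C_def by simp
  hence ca: "cmod a = 1" using norm_ge_zero[of a] by (auto simp: power2_eq_1_iff)
  have "cmod b ^ 2 = 1" unfolding b_def norm_line_sq using r2 unfolding A_def B_def C_def by simp
  hence cb: "cmod b = 1" using norm_ge_zero[of b] by (auto simp: power2_eq_1_iff)
  have "l1 < l2" unfolding l1_def l2_def using A Dp by (simp add: divide_strict_right_mono)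
  moreover have "d \<noteq> 0" unfolding d_def using RS by simp
  ultimately have ab: "a \<noteq> b" unfolding a_def b_def by auto
  have col: "collinear {a, b, X}" if "X \<in> {R, S}" for X
  proof -
    have "\<forall>x \<in> {a, b, X}. \<exists>c. x = R + c *\<^sub>R d"
      using that unfolding a_def b_def d_def
      by (auto simp: scaleR_conv_of_real intro: exI[of _ l1] exI[of _ l2] exI[of _ 0] exI[of _ 1])
    thus ?thesis unfolding collinear_alt by blast
  qed
  have "is_chord_ends R S a b" unfolding is_chord_ends_def Circle_def using ca cb ab col by auto
  thus ?thesis by blast
qed

lemma kdist_nonneg: "kdist P Q \<ge> 0"
  unfolding kdist_def by (auto split: prod.split)

lemma chord_ends_spec:
  assumes "cmod R < 1" "cmod S < 1" "R \<noteq> S"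
  shows "is_chord_ends R S (fst (chord_ends R S)) (snd (chord_ends R S))"
proof -
  obtain a b where "is_chord_ends R S a b" using chord_ends_exist[OF assms] by blast
  hence "\<exists>p. (case p of (v1, v2) \<Rightarrow> is_chord_ends R S v1 v2)" by auto
  hence "case (SOME p. (case p of (v1, v2) \<Rightarrow> is_chord_ends R S v1 v2)) of (v1, v2) \<Rightarrow> is_chord_ends R S v1 v2"
    by (rule someI_ex)
  thus ?thesis unfolding chord_ends_def by (simp split: prod.splits)
qed

lemma Fk_cosh_ends:
  assumes R: "cmod R < 1" and S: "cmod S < 1" and RS: "R \<noteq> S" and e: "is_chord_ends R S a b"
  shows "cosh (Fk R S a b) ^ 2 = (1 - Re (R * cnj S))^2 / ((1 - cmod R ^ 2) * (1 - cmod S ^ 2))"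
proof -
  have a: "cmod a = 1" and b: "cmod b = 1" and ab: "a \<noteq> b" and cR: "collinear {a,b,R}" and cS: "collinear {a,b,S}"
    using e unfolding is_chord_ends_def Circle_def by auto
  obtain s where s: "R = a + of_real s * (b - a)" using cR coll_param[OF ab] by blast
  obtain t where t: "S = a + of_real t * (b - a)" using cS coll_param[OF ab] by blast
  show ?thesis by (rule Fk_cosh[OF a b ab s t R S RS])
qed

lemma kdist_cosh:
  assumes R: "cmod R < 1" and S: "cmod S < 1"
  shows "cosh (kdist R S) ^ 2 = (1 - Re (R * cnj S))^2 / ((1 - cmod R ^ 2) * (1 - cmod S ^ 2))"
proof (cases "R = S")
  case True
  have "1 - cmod R ^ 2 > 0" using R by (simp add: power_less_one_iff)
  have re: "Re (R * cnj R) = cmod R ^ 2" by (simp only: norm_sq_comp) simp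
  have eq: "(1 - Re (R * cnj S))^2 / ((1 - cmod R ^ 2) * (1 - cmod S ^ 2)) = 1"
    unfolding True[symmetric] re using \<open>1 - cmod R ^ 2 > 0\<close> by (simp add: power2_eq_square)
  have k0: "kdist R S = 0" using True unfolding kdist_def by simp
  show ?thesis unfolding k0 cosh_0 power_one by (rule sym[OF eq])
next
  case False
  have k: "kdist R S = Fk R S (fst (chord_ends R S)) (snd (chord_ends R S))"
    unfolding kdist_def Fk_def using False by (simp split: prod.split)
  show ?thesis unfolding k by (rule Fk_cosh_ends[OF R S False chord_ends_spec[OF R S False]])
qed

lemma cosh_sq_inj:
  fixes x y :: real
  assumes "x \<ge> 0" "y \<ge> 0" "cosh x ^ 2 = cosh y ^ 2"
  shows "x = y"
proof -
  have "cosh x > 0" "cosh y > 0" by auto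
  hence "cosh x = cosh y" using assms(3) by (simp add: power2_eq_iff_nonneg)
  thus ?thesis using assms(1,2) by simp
qed

lemma kdist_eq_Fk:
  assumes R: "cmod R < 1" and S: "cmod S < 1" and RS: "R \<noteq> S" and e: "is_chord_ends R S a b"
  shows "kdist R S = Fk R S a b"
proof (rule cosh_sq_inj)
  show "kdist R S \<ge> 0" by (rule kdist_nonneg)
  show "Fk R S a b \<ge> 0" unfolding Fk_def by simp
  show "cosh (kdist R S) ^ 2 = cosh (Fk R S a b) ^ 2"
    unfolding kdist_cosh[OF R S] Fk_cosh_ends[OF R S RS e] ..
qed


lemma chord_set:
  fixes a b P Q :: complex and s t :: real
  assumes a: "cmod a = 1" and b: "cmod b = 1" and ab: "a \<noteq> b"
    and P: "P = a + of_real s * (b - a)" and Q: "Q = a + of_real t * (b - a)" and st: "s \<noteq> t"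
  shows "{S \<in> Disk. collinear {P, Q, S}} = (\<lambda>x. a + of_real x * (b - a)) ` {0<..<1}"
proof -
  have PQ: "P \<noteq> Q" using P Q st ab by auto
  have col: "collinear {P, Q, S} \<longleftrightarrow> (\<exists>x::real. S = a + of_real x * (b - a))" for S
  proof
    assume "collinear {P, Q, S}"
    then obtain u::real where "S = P + of_real u * (Q - P)" using coll_param[OF PQ] by blast
    hence "S = a + of_real (s + u * (t - s)) * (b - a)" unfolding P Q by (simp add: algebra_simps)
    thus "\<exists>x::real. S = a + of_real x * (b - a)" by blast
  next
    assume "\<exists>x::real. S = a + of_real x * (b - a)"
    then obtain x::real where x: "S = a + of_real x * (b - a)" by blast
    have "S = P + of_real ((x - s)/(t - s)) * (Q - P)"
    proof -
      have "of_real ((x - s)/(t - s)) * (Q - P) = of_real ((x - s)/(t - s)) * (of_real (t - s) * (b - a))"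
        unfolding P Q by (simp add: algebra_simps)
      also have "\<dots> = of_real (x - s) * (b - a)" using st
        by (simp only: mult.assoc[symmetric] of_real_mult[symmetric]) simp
      finally show ?thesis unfolding x P by (simp add: algebra_simps)
    qed
    thus "collinear {P, Q, S}" using coll_param[OF PQ] by blast
  qed
  show ?thesis
  proof (rule set_eqI)
    fix S
    show "S \<in> {S \<in> Disk. collinear {P, Q, S}} \<longleftrightarrow> S \<in> (\<lambda>x. a + of_real x * (b - a)) ` {0<..<1}"
    proof
      assume "S \<in> {S \<in> Disk. collinear {P, Q, S}}"
      then obtain x::real where x: "S = a + of_real x * (b - a)" and d: "cmod S < 1"
        using col unfolding Disk_def by auto
      have "cmod (a + of_real x * (b - a)) < 1" using d unfolding x .
      note in_unit_param[OF a b ab this]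
      thus "S \<in> (\<lambda>x. a + of_real x * (b - a)) ` {0<..<1}" unfolding x by auto
    next
      assume "S \<in> (\<lambda>x. a + of_real x * (b - a)) ` {0<..<1}"
      then obtain x::real where x: "S = a + of_real x * (b - a)" and "x \<in> {0<..<1}"
        by blast
      hence x01: "0 < x" "x < 1" by auto
      have "1 - cmod S ^ 2 = x * (1 - x) * cmod (a - b) ^ 2" unfolding x by (rule one_minus_norm_line[OF a b])
      moreover have "x * (1 - x) * cmod (a - b) ^ 2 > 0" using x01 ab by simp
      ultimately have "cmod S ^ 2 < 1" by linarith
      hence "cmod S < 1" by (simp add: power_less_one_iff)
      thus "S \<in> {S \<in> Disk. collinear {P, Q, S}}" unfolding Disk_def using col x by auto
    qed
  qed
qed


lemma sq_ineq:
  fixes al be x :: real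
  shows "((1 - x) * al + x * be)^2 - 4 * al * be * (x * (1 - x)) = ((1 - x) * al - x * be)^2"
  by (simp add: algebra_simps power2_eq_square)

lemma delta_formula:
  fixes a b P Q R :: complex and s t :: real
  assumes a: "cmod a = 1" and b: "cmod b = 1" and ab: "a \<noteq> b"
    and P: "P = a + of_real s * (b - a)" and Q: "Q = a + of_real t * (b - a)" and st: "s \<noteq> t"
    and R: "cmod R < 1"
  shows "cosh (delta P Q R) ^ 2 = 4 * (1 - Re (R * cnj a)) * (1 - Re (R * cnj b)) / ((1 - cmod R ^ 2) * cmod (a - b) ^ 2)"
    "delta P Q R \<ge> 0"
proof -
  define al where "al = 1 - Re (R * cnj a)"
  define be where "be = 1 - Re (R * cnj b)"
  define N where "N = 1 - cmod R ^ 2"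
  define L where "L = cmod (a - b) ^ 2"
  have al: "al > 0" unfolding al_def using R a abs_Re_le_cmod[of "R * cnj a"] by (simp add: norm_mult)
  have be: "be > 0" unfolding be_def using R b abs_Re_le_cmod[of "R * cnj b"] by (simp add: norm_mult)
  have N: "N > 0" unfolding N_def using R by (simp add: power_less_one_iff)
  have L: "L > 0" unfolding L_def using ab by simp
  have canc: "4 * al * be * y / (N * (y * L)) = 4 * al * be / (N * L)" if "y > 0" for y
    using that N L by (simp add: field_simps)
  define f where "f = (\<lambda>x::real. a + of_real x * (b - a))"
  have kd: "cosh (kdist R (f x)) ^ 2 = ((1 - x) * al + x * be)^2 / (N * (x * (1 - x) * L))"
    if x: "0 < x" "x < 1" for x
  proof -
    have "1 - cmod (f x) ^ 2 = x * (1 - x) * L" unfolding f_def L_def by (rule one_minus_norm_line[OF a b])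
    moreover have "x * (1 - x) * L > 0" using x L by simp
    ultimately have fd: "cmod (f x) < 1" by (smt (verit) power_less_one_iff norm_ge_zero)
    have "1 - Re (R * cnj (f x)) = (1 - x) * al + x * be" unfolding f_def al_def be_def re_lin_right
      by (simp add: algebra_simps)
    thus ?thesis unfolding kdist_cosh[OF R fd] using \<open>1 - cmod (f x) ^ 2 = x * (1 - x) * L\<close>
      unfolding N_def by simp
  qed
  define x0 where "x0 = al / (al + be)"
  have x0: "0 < x0" "x0 < 1" unfolding x0_def using al be by auto
  have eqx0: "(1 - x0) * al = x0 * be" unfolding x0_def using al be by (simp add: field_simps)
  have M: "cosh (kdist R (f x0)) ^ 2 = 4 * al * be / (N * L)"
  proof -
    have "((1 - x0) * al + x0 * be)^2 = 4 * al * be * (x0 * (1 - x0))"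
      using sq_ineq[of x0 al be] eqx0 by simp
    hence "cosh (kdist R (f x0)) ^ 2 = 4 * al * be * (x0 * (1 - x0)) / (N * (x0 * (1 - x0) * L))"
      using kd[OF x0] by simp
    also have "\<dots> = 4 * al * be / (N * L)" using x0 canc by simp
    finally show ?thesis .
  qed
  have low: "kdist R (f x0) \<le> kdist R (f x)" if x: "0 < x" "x < 1" for x
  proof -
    have pos: "N * (x * (1 - x) * L) > 0" using x N L by simp
    have "4 * al * be * (x * (1 - x)) \<le> ((1 - x) * al + x * be)^2"
      using sq_ineq[of x al be] by (smt (verit) zero_le_power2)
    hence "4 * al * be * (x * (1 - x)) / (N * (x * (1 - x) * L)) \<le> ((1 - x) * al + x * be)^2 / (N * (x * (1 - x) * L))"
      using pos by (intro divide_right_mono) auto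
    moreover have "4 * al * be * (x * (1 - x)) / (N * (x * (1 - x) * L)) = 4 * al * be / (N * L)"
      using x canc by simp
    ultimately have "cosh (kdist R (f x0)) ^ 2 \<le> cosh (kdist R (f x)) ^ 2" using M kd[OF x] by simp
    hence "cosh (kdist R (f x0)) \<le> cosh (kdist R (f x))"
      by (rule power2_le_imp_le) (simp add: less_imp_le)
    thus ?thesis using cosh_real_nonneg_le_iff[OF kdist_nonneg kdist_nonneg] by blast
  qed
  have dl: "delta P Q R = kdist R (f x0)"
    unfolding delta_def chord_set[OF a b ab P Q st] f_def[symmetric]
    by (rule cInf_eq_minimum) (use x0 low in auto)
  show "cosh (delta P Q R) ^ 2 = 4 * (1 - Re (R * cnj a)) * (1 - Re (R * cnj b)) / ((1 - cmod R ^ 2) * cmod (a - b) ^ 2)"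
    unfolding dl M al_def be_def N_def L_def ..
  show "delta P Q R \<ge> 0" unfolding dl by (rule kdist_nonneg)
qed

lemma delta_on_chord:
  fixes a b P Q R :: complex and s t :: real
  assumes a: "cmod a = 1" and b: "cmod b = 1" and ab: "a \<noteq> b"
    and P: "P = a + of_real s * (b - a)" and Q: "Q = a + of_real t * (b - a)" and st: "s \<noteq> t"
    and R: "cmod R < 1" and c: "collinear {P, Q, R}"
  shows "delta P Q R = 0"
proof -
  have "R \<in> {S \<in> Disk. collinear {P, Q, S}}" using R c unfolding Disk_def by simp
  hence "kdist R R \<in> kdist R ` {S \<in> Disk. collinear {P, Q, S}}" by simp
  hence "delta P Q R \<le> kdist R R" unfolding delta_def
    by (rule cInf_lower) (rule bdd_belowI[of _ 0], auto simp: kdist_nonneg)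
  moreover have "kdist R R = 0" unfolding kdist_def by simp
  ultimately show ?thesis using delta_formula(2)[OF a b ab P Q st R] by simp
qed


lemma Delta_cosh:
  fixes a b P Q :: complex and s t :: real
  assumes a: "cmod a = 1" and b: "cmod b = 1" and ab: "a \<noteq> b"
    and P: "P = a + of_real s * (b - a)" and Q: "Q = a + of_real t * (b - a)"
    and s: "0 < s" and st: "s < t" and t: "t < 1"
    and PD: "cmod P < 1" and QD: "cmod Q < 1" and e: "is_chord_ends P Q a b"
  shows "Delta' 1 P Q > 0" "cosh (Delta' 1 P Q / 2) ^ 2 = t * (1 - s) / (t - s)"
proof -
  have PQ: "P \<noteq> Q" using P Q st ab by auto
  define c where "c = cmod (b - a)"
  have c: "c > 0" using ab unfolding c_def by simp
  have d1: "dist a Q = t * c" unfolding dist_norm Q c_def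
  proof -
    have "a - (a + of_real t * (b - a)) = - (of_real t * (b - a))" by simp
    thus "cmod (a - (a + of_real t * (b - a))) = t * cmod (b - a)"
      using s st norm_scale_nonneg[of t "b - a"] by (simp only: norm_minus_cancel)
  qed
  have d2: "dist a P = s * c" unfolding dist_norm P c_def
  proof -
    have "a - (a + of_real s * (b - a)) = - (of_real s * (b - a))" by simp
    thus "cmod (a - (a + of_real s * (b - a))) = s * cmod (b - a)"
      using s norm_scale_nonneg[of s "b - a"] by (simp only: norm_minus_cancel)
  qed
  have d3: "dist b P = (1 - s) * c" unfolding dist_norm P c_def
  proof -
    have "b - (a + of_real s * (b - a)) = of_real (1 - s) * (b - a)" by (simp add: algebra_simps)
    thus "cmod (b - (a + of_real s * (b - a))) = (1 - s) * cmod (b - a)"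
      using s st t norm_scale_nonneg[of "1-s" "b - a"] by simp
  qed
  have d4: "dist b Q = (1 - t) * c" unfolding dist_norm Q c_def
  proof -
    have "b - (a + of_real t * (b - a)) = of_real (1 - t) * (b - a)" by (simp add: algebra_simps)
    thus "cmod (b - (a + of_real t * (b - a))) = (1 - t) * cmod (b - a)"
      using t norm_scale_nonneg[of "1-t" "b - a"] by simp
  qed
  define X where "X = (t * (1 - s)) / (s * (1 - t))"
  have X1: "X > 1" unfolding X_def using s st t by (simp add: field_simps)
  have "(dist a Q * dist b P) / (dist a P * dist b Q) = X"
  proof -
    have "s - s * t \<noteq> 0" "t - s * t \<noteq> 0" using s st t by (auto simp: algebra_simps)
    thus ?thesis unfolding d1 d2 d3 d4 X_def using c by (simp add: field_simps)
  qed
  hence kd: "kdist P Q = 1/2 * ln X"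
    unfolding kdist_eq_Fk[OF PD QD PQ e] Fk_def using X1 by simp
  define y where "y = exp (kdist P Q)"
  have "y^2 = exp (kdist P Q + kdist P Q)" unfolding y_def power2_eq_square by (rule exp_add[symmetric])
  also have "kdist P Q + kdist P Q = ln X" unfolding kd by simp
  also have "exp (ln X) = X" using X1 by simp
  finally have y2: "y^2 = X" .
  have y0: "y > 0" unfolding y_def by simp
  have y1: "y > 1"
  proof (rule ccontr)
    assume "\<not> y > 1"
    hence "y^2 \<le> 1" using y0 by (simp add: power_le_one)
    thus False using y2 X1 by simp
  qed
  define Y where "Y = (y + 1) / (y - 1)"
  have Y1: "Y > 1" unfolding Y_def using y1 by simp
  have Dl: "Delta' 1 P Q = ln Y" unfolding Delta'_def Y_def y_def by simp
  show "Delta' 1 P Q > 0" unfolding Dl using Y1 by simp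
  have "Delta' 1 P Q / 2 = 1/2 * \<bar>ln Y\<bar>" unfolding Dl using Y1 by simp
  hence "cosh (Delta' 1 P Q / 2) ^ 2 = ((Y + 1/Y)/2 + 1)/2" using cosh_half_abs_ln[of Y] Y1 by simp
  also have "\<dots> = y^2 / (y^2 - 1)"
  proof -
    have nz: "y * y - 1 \<noteq> 0" "y * (y * 2) - 2 \<noteq> 0" "y - 1 \<noteq> 0" "y + 1 \<noteq> 0" "y \<noteq> 0"
    proof -
      have "y * y > 1" using y1 by (metis less_1_mult)
      thus "y * y - 1 \<noteq> 0" "y * (y * 2) - 2 \<noteq> 0" "y - 1 \<noteq> 0" "y + 1 \<noteq> 0" "y \<noteq> 0"
        using y1 by auto
    qed
    show ?thesis unfolding Y_def using nz by (simp add: field_simps power2_eq_square)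
  qed
  also have "\<dots> = X / (X - 1)" unfolding y2 ..
  also have "\<dots> = t * (1 - s) / (t - s)"
  proof -
    have nz: "s * (1 - t) \<noteq> 0" "t - s \<noteq> 0" using s st t by auto
    have gen: "\<And>A C::real. C \<noteq> 0 \<Longrightarrow> A / C - 1 = (A - C) / C" by (simp add: field_simps)
    have "t * (1 - s) - s * (1 - t) = t - s" by (simp add: algebra_simps)
    hence "X - 1 = (t - s) / (s * (1 - t))" unfolding X_def using gen[OF nz(1), of "t * (1 - s)"] by simp
    hence "X / (X - 1) = (t * (1 - s) / (s * (1 - t))) / ((t - s) / (s * (1 - t)))" unfolding X_def by simp
    also have "\<dots> = t * (1 - s) / (t - s)" using nz by simp
    finally show ?thesis .
  qed
  finally show "cosh (Delta' 1 P Q / 2) ^ 2 = t * (1 - s) / (t - s)" .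
qed


lemma core_identity:
  fixes a b w1 w2 R rb s t :: complex
  assumes h1: "R + a*w2*rb = a + w2" and h2: "R + b*w1*rb = b + w1"
  shows "(a*w2 - b*w1)^2 * ((2*a - R - rb*a^2)*(2*b - R - rb*b^2)*(t - s) + t*(1-s)*(1 - R*rb)*(a-b)^2)
     = (a-b)^2*(a-w1)*(b-w2)*((a-w2)*(b-w1)*(t-s) + t*(1-s)*(a-b)*(w1-w2))"
proof -
  define D where "D = a*w2 - b*w1"
  have Drb: "D*rb = a + w2 - b - w1" unfolding D_def using h1 h2 by algebra
  have DR: "D*R = a*b*(w2 - w1) + (a-b)*w1*w2" unfolding D_def using h1 h2 by algebra
  have Da: "D*(2*a - R - rb*a^2) = -(a-b)*(a-w1)*(a-w2)"
  proof -
    have "D*(2*a - R - rb*a^2) = 2*a*D - D*R - a^2*(D*rb)" by (simp add: algebra_simps)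
    also have "\<dots> = -(a-b)*(a-w1)*(a-w2)" unfolding DR Drb unfolding D_def by algebra
    finally show ?thesis .
  qed
  have Db: "D*(2*b - R - rb*b^2) = -(a-b)*(b-w1)*(b-w2)"
  proof -
    have "D*(2*b - R - rb*b^2) = 2*b*D - D*R - b^2*(D*rb)" by (simp add: algebra_simps)
    also have "\<dots> = -(a-b)*(b-w1)*(b-w2)" unfolding DR Drb unfolding D_def by algebra
    finally show ?thesis .
  qed
  have DN: "D^2*(1 - R*rb) = (a-b)*(a-w1)*(b-w2)*(w1-w2)"
  proof -
    have "D^2*(1 - R*rb) = D^2 - (D*R)*(D*rb)" by (simp add: algebra_simps power2_eq_square)
    also have "\<dots> = (a-b)*(a-w1)*(b-w2)*(w1-w2)" unfolding DR Drb unfolding D_def by algebra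
    finally show ?thesis .
  qed
  have "D^2 * ((2*a - R - rb*a^2)*(2*b - R - rb*b^2)*(t - s) + t*(1-s)*(1 - R*rb)*(a-b)^2)
     = (D*(2*a - R - rb*a^2))*(D*(2*b - R - rb*b^2))*(t - s) + t*(1-s)*(D^2*(1 - R*rb))*(a-b)^2"
    by (simp add: algebra_simps power2_eq_square)
  also have "\<dots> = (a-b)^2*(a-w1)*(b-w2)*((a-w2)*(b-w1)*(t-s) + t*(1-s)*(a-b)*(w1-w2))"
    unfolding Da Db DN by algebra
  finally show ?thesis unfolding D_def .
qed

lemma G_identity:
  fixes a b w w1 w2 s t :: complex
  shows "((1-t)*b*(a-w) + t*a*(b-w)) * ((a-w2)*(b-w1)*(t-s) + t*(1-s)*(a-b)*(w1-w2))
    = -t*(1-t)*(a-b)*((1-s)*b*(a-w)*(a-w1) + s*a*(b-w)*(b-w1))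
      + ((b-w1)*(t-s) + t*(1-s)*(a-b)) * ((1-t)*b*(a-w)*(a-w2) + t*a*(b-w)*(b-w2))"
  by algebra


lemma eqP_chord:
  fixes a b P w w1 :: complex and s :: real
  assumes a: "cmod a = 1" and b: "cmod b = 1" and P: "P = a + of_real s * (b - a)"
  shows "a*b*(P + w*w1*cnj P - w - w1) = (1 - of_real s)*b*(a-w)*(a-w1) + of_real s*a*(b-w)*(b-w1)"
proof -
  have a0: "a \<noteq> 0" and b0: "b \<noteq> 0" using a b by auto
  have "cnj P = 1/a + of_real s * (1/b - 1/a)" unfolding P using cnj_unit[OF a] cnj_unit[OF b] by simp
  hence c: "a*b*cnj P = b + of_real s * (a - b)" using a0 b0 by (simp add: field_simps)
  have "a*b*(P + w*w1*cnj P - w - w1) = a*b*P + w*w1*(a*b*cnj P) - a*b*w - a*b*w1" by (simp add: algebra_simps)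
  also have "\<dots> = (1 - of_real s)*b*(a-w)*(a-w1) + of_real s*a*(b-w)*(b-w1)" unfolding c unfolding P by algebra
  finally show ?thesis .
qed

lemma cond_conv:
  fixes a b R :: complex and s t :: real
  assumes a: "cmod a = 1" and b: "cmod b = 1"
  shows "(2*a - R - cnj R*a^2)*(2*b - R - cnj R*b^2)*(of_real t - of_real s)
      + of_real t*(1 - of_real s)*(1 - R*cnj R)*(a-b)^2
    = a * b * of_real (4 * (1 - Re (R * cnj a)) * (1 - Re (R * cnj b)) * (t - s)
         - t * (1 - s) * (1 - cmod R ^ 2) * cmod (a - b) ^ 2)"
proof -
  have a0: "a \<noteq> 0" and b0: "b \<noteq> 0" using a b by auto
  have ca: "cnj a = 1/a" and cb: "cnj b = 1/b" using cnj_unit a b by auto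
  have ra: "complex_of_real (Re (R * cnj a)) = (R * cnj a + cnj R * a) / 2"
    using complex_add_cnj[of "R * cnj a"] by simp
  have rb: "complex_of_real (Re (R * cnj b)) = (R * cnj b + cnj R * b) / 2"
    using complex_add_cnj[of "R * cnj b"] by simp
  have al: "2*a - R - cnj R*a^2 = 2*a*complex_of_real (1 - Re (R * cnj a))"
    unfolding of_real_diff ra unfolding ca using a0 by (simp add: field_simps power2_eq_square)
  have be: "2*b - R - cnj R*b^2 = 2*b*complex_of_real (1 - Re (R * cnj b))"
    unfolding of_real_diff rb unfolding cb using b0 by (simp add: field_simps power2_eq_square)
  have N: "1 - R*cnj R = complex_of_real (1 - cmod R ^ 2)"
    unfolding of_real_diff complex_norm_square by simp
  have L: "(a-b)^2 = - a * b * complex_of_real (cmod (a - b) ^ 2)"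
    unfolding complex_norm_square using ca cb a0 b0 by (simp add: field_simps power2_eq_square)
  show ?thesis unfolding al be N L by (simp add: algebra_simps)
qed


theorem lemma4p2:
  fixes P Q R v1 v2 :: complex
  assumes "P \<in> Disk" and "Q \<in> Disk" and "P \<noteq> Q"
    and "is_chord_ends P Q v1 v2"
    and "dist v1 P < dist v1 Q"
    and "R \<in> Disk"
  shows "(\<exists>w w1 w2. w \<in> Circle \<and> w \<noteq> v1 \<and> w \<noteq> v2 \<and>
            w1 \<in> Circle \<and> w1 \<noteq> w \<and> collinear {w, P, w1} \<and>
            w2 \<in> Circle \<and> w2 \<noteq> w \<and> collinear {w, Q, w2} \<and>
            collinear {v1, w2, R} \<and> collinear {v2, w1, R})
         \<longleftrightarrow> delta P Q R = Delta' 1 P Q / 2"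
proof -
  define a where "a = v1"
  define b where "b = v2"
  have PD: "cmod P < 1" and QD: "cmod Q < 1" and RD: "cmod R < 1"
    using assms(1,2,6) unfolding Disk_def by auto
  have e: "is_chord_ends P Q a b" using assms(4) unfolding a_def b_def .
  have a: "cmod a = 1" and b: "cmod b = 1" and ab: "a \<noteq> b"
    and cP: "collinear {a, b, P}" and cQ: "collinear {a, b, Q}"
    using e unfolding is_chord_ends_def Circle_def by auto
  have a0: "a \<noteq> 0" and b0: "b \<noteq> 0" using a b by auto
  have "\<exists>u::real. P = a + of_real u * (b - a)" using cP unfolding coll_param[OF ab] .
  then obtain s where Ps: "P = a + of_real s * (b - a)" by (elim exE)
  have "\<exists>u::real. Q = a + of_real u * (b - a)" using cQ unfolding coll_param[OF ab] .
  then obtain t where Qt: "Q = a + of_real t * (b - a)" by (elim exE)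
  have "cmod (a + of_real s * (b - a)) < 1" using PD unfolding Ps .
  note s01 = in_unit_param[OF a b ab this]
  have "cmod (a + of_real t * (b - a)) < 1" using QD unfolding Qt .
  note t01 = in_unit_param[OF a b ab this]
  have st: "s < t"
  proof -
    have "dist a P = s * cmod (b - a)" unfolding Ps dist_norm
      using s01 by (simp add: norm_mult norm_minus_commute)
    moreover have "dist a Q = t * cmod (b - a)" unfolding Qt dist_norm
      using t01 by (simp add: norm_mult norm_minus_commute)
    moreover have "cmod (b - a) > 0" using ab by simp
    ultimately show ?thesis using assms(5) unfolding a_def by simp
  qed
  have stne: "s \<noteq> t" using st by simp
  define al where "al = 1 - Re (R * cnj a)"
  define be where "be = 1 - Re (R * cnj b)"
  define N where "N = 1 - cmod R ^ 2"
  define L where "L = cmod (a - b) ^ 2"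
  have al: "al > 0" unfolding al_def using RD a abs_Re_le_cmod[of "R * cnj a"] by (simp add: norm_mult)
  have be: "be > 0" unfolding be_def using RD b abs_Re_le_cmod[of "R * cnj b"] by (simp add: norm_mult)
  have N: "N > 0" unfolding N_def using RD by (simp add: power_less_one_iff)
  have L: "L > 0" unfolding L_def using ab by simp
  note df = delta_formula[OF a b ab Ps Qt stne RD]
  note Df = Delta_cosh[OF a b ab Ps Qt s01(1) st t01(2) PD QD e]
  have metric: "delta P Q R = Delta' 1 P Q / 2 \<longleftrightarrow> 4 * al * be * (t - s) = t * (1 - s) * N * L"
  proof -
    have "delta P Q R = Delta' 1 P Q / 2 \<longleftrightarrow> cosh (delta P Q R) ^ 2 = cosh (Delta' 1 P Q / 2) ^ 2"
    proof
      assume "cosh (delta P Q R) ^ 2 = cosh (Delta' 1 P Q / 2) ^ 2"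
      moreover have "Delta' 1 P Q / 2 \<ge> 0" using Df(1) by simp
      ultimately show "delta P Q R = Delta' 1 P Q / 2" using cosh_sq_inj[OF df(2)] by blast
    qed simp
    also have "\<dots> \<longleftrightarrow> 4 * al * be / (N * L) = t * (1 - s) / (t - s)"
      unfolding df(1) Df(2) al_def be_def N_def L_def ..
    also have "\<dots> \<longleftrightarrow> 4 * al * be * (t - s) = t * (1 - s) * N * L"
      using N L st by (simp add: frac_eq_eq algebra_simps)
    finally show ?thesis .
  qed
  define Cc where "Cc = (2*a - R - cnj R*a^2)*(2*b - R - cnj R*b^2)*(of_real t - of_real s)
      + of_real t*(1 - of_real s)*(1 - R*cnj R)*(a-b)^2"
  have Cc: "Cc = a * b * of_real (4 * al * be * (t - s) - t * (1 - s) * N * L)"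
    unfolding Cc_def cond_conv[OF a b] al_def be_def N_def L_def by (simp add: algebra_simps)
  have cond_iff: "4 * al * be * (t - s) = t * (1 - s) * N * L \<longleftrightarrow> Cc = 0"
  proof -
    have "Cc = 0 \<longleftrightarrow> (4 * al * be * (t - s) - t * (1 - s) * N * L) = 0"
      unfolding Cc using a0 b0 by (simp only: mult_eq_0_iff of_real_eq_0_iff simp_thms)
    thus ?thesis by simp
  qed
  define S where "S = complex_of_real s"
  define T where "T = complex_of_real t"
  have S0: "S \<noteq> 0" "1 - S \<noteq> 0" unfolding S_def using s01 by auto
  have T0: "T \<noteq> 0" "1 - T \<noteq> 0" unfolding T_def using t01 by auto
  have eqP: "a*b*(P + w*w1*cnj P - w - w1) = (1 - S)*b*(a-w)*(a-w1) + S*a*(b-w)*(b-w1)" for w w1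
    unfolding S_def by (rule eqP_chord[OF a b Ps])
  have eqQ: "a*b*(Q + w*w2*cnj Q - w - w2) = (1 - T)*b*(a-w)*(a-w2) + T*a*(b-w)*(b-w2)" for w w2
    unfolding T_def by (rule eqP_chord[OF a b Qt])
  show ?thesis
  proof
    assume "\<exists>w w1 w2. w \<in> Circle \<and> w \<noteq> v1 \<and> w \<noteq> v2 \<and>
            w1 \<in> Circle \<and> w1 \<noteq> w \<and> collinear {w, P, w1} \<and>
            w2 \<in> Circle \<and> w2 \<noteq> w \<and> collinear {w, Q, w2} \<and>
            collinear {v1, w2, R} \<and> collinear {v2, w1, R}"
    then obtain w w1 w2 where w: "cmod w = 1" "w \<noteq> a" "w \<noteq> b"
      and w1: "cmod w1 = 1" "w1 \<noteq> w" "collinear {w, w1, P}"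
      and w2: "cmod w2 = 1" "w2 \<noteq> w" "collinear {w, w2, Q}"
      and c1: "collinear {a, w2, R}" and c2: "collinear {b, w1, R}"
      unfolding Circle_def a_def b_def by (auto simp: insert_commute)
    have "P + w*w1*cnj P = w + w1" using chord_eq[OF w(1) w1(1) w1(2)[symmetric]] w1(3) by simp
    hence EP: "(1 - S)*b*(a-w)*(a-w1) + S*a*(b-w)*(b-w1) = 0" using eqP[of w w1] by simp
    have "Q + w*w2*cnj Q = w + w2" using chord_eq[OF w(1) w2(1) w2(2)[symmetric]] w2(3) by simp
    hence EQ: "(1 - T)*b*(a-w)*(a-w2) + T*a*(b-w)*(b-w2) = 0" using eqQ[of w w2] by simp
    have w1a: "w1 \<noteq> a"
    proof
      assume "w1 = a"
      hence "S * a * (b - w) * (b - a) = 0" using EP by simp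
      thus False using S0 a0 w ab by auto
    qed
    have w1b: "w1 \<noteq> b"
    proof
      assume "w1 = b"
      hence "(1 - S) * b * (a - w) * (a - b) = 0" using EP by simp
      thus False using S0 b0 w ab by auto
    qed
    have w2a: "w2 \<noteq> a"
    proof
      assume "w2 = a"
      hence "T * a * (b - w) * (b - a) = 0" using EQ by simp
      thus False using T0 a0 w ab by auto
    qed
    have w2b: "w2 \<noteq> b"
    proof
      assume "w2 = b"
      hence "(1 - T) * b * (a - w) * (a - b) = 0" using EQ by simp
      thus False using T0 b0 w ab by auto
    qed
    have h1: "R + a*w2*cnj R = a + w2" using chord_eq[OF a w2(1) w2a[symmetric]] c1 by simp
    have h2: "R + b*w1*cnj R = b + w1" using chord_eq[OF b w1(1) w1b[symmetric]] c2 by simp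
    have D: "a*w2 - b*w1 \<noteq> 0"
    proof
      assume D0: "a*w2 - b*w1 = 0"
      have "(a - b) * (a - w1) = 0" using D0 h1 h2 by algebra
      thus False using ab w1a by simp
    qed
    have D2: "(1-T)*b*(a-w) + T*a*(b-w) \<noteq> 0"
    proof
      assume D0: "(1-T)*b*(a-w) + T*a*(b-w) = 0"
      have "T * a * (b - w) * (b - a) = 0" using D0 EQ by algebra
      thus False using T0 a0 w ab by auto
    qed
    have "((1-T)*b*(a-w) + T*a*(b-w)) * ((a-w2)*(b-w1)*(T-S) + T*(1-S)*(a-b)*(w1-w2)) = 0"
      unfolding G_identity EP EQ by simp
    hence G: "(a-w2)*(b-w1)*(T-S) + T*(1-S)*(a-b)*(w1-w2) = 0" using D2 by simp
    have "(a*w2 - b*w1)^2 * Cc = 0"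
      unfolding Cc_def core_identity[OF h1 h2] S_def[symmetric] T_def[symmetric] G by simp
    hence "Cc = 0" using D by simp
    thus "delta P Q R = Delta' 1 P Q / 2" using metric cond_iff by simp
  next
    assume dl: "delta P Q R = Delta' 1 P Q / 2"
    hence Cc0: "Cc = 0" using metric cond_iff by simp
    have notc: "\<not> collinear {a, b, R}"
    proof
      assume "collinear {a, b, R}"
      hence "\<exists>u::real. R = a + of_real u * (b - a)" unfolding coll_param[OF ab] .
      then obtain x where x: "R = a + of_real x * (b - a)" by (elim exE)
      have "cmod (a + of_real x * (b - a)) < 1" using RD unfolding x .
      note x01 = in_unit_param[OF a b ab this]
      have "R \<in> (\<lambda>x. a + of_real x * (b - a)) ` {0<..<1}" unfolding x using x01 by (intro imageI) simp
      hence "R \<in> {S \<in> Disk. collinear {P, Q, S}}" unfolding chord_set[OF a b ab Ps Qt stne] .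
      hence "collinear {P, Q, R}" by simp
      hence "delta P Q R = 0" by (rule delta_on_chord[OF a b ab Ps Qt stne RD])
      thus False using dl Df(1) by simp
    qed
    define w2 where "w2 = sec a R"
    define w1 where "w1 = sec b R"
    note sa = sec_props[OF a RD, folded w2_def]
    note sb = sec_props[OF b RD, folded w1_def]
    have h1: "R + a*w2*cnj R = a + w2" using sa(5) by algebra
    have h2: "R + b*w1*cnj R = b + w1" using sb(5) by algebra
    have w1a: "w1 \<noteq> a"
    proof
      assume "w1 = a"
      hence "R + a*b*cnj R = a + b" using h2 by (simp add: algebra_simps)
      thus False using notc chord_eq[OF a b ab] by simp
    qed
    have w2b: "w2 \<noteq> b"
    proof
      assume "w2 = b"
      hence "R + a*b*cnj R = a + b" using h1 by (simp add: algebra_simps)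
      thus False using notc chord_eq[OF a b ab] by simp
    qed
    have D: "a*w2 - b*w1 \<noteq> 0"
    proof
      assume D0: "a*w2 - b*w1 = 0"
      have "(a - b) * (a - w1) = 0" using D0 h1 h2 by algebra
      thus False using ab w1a by simp
    qed
    have "(a-b)^2*(a-w1)*(b-w2)*((a-w2)*(b-w1)*(T-S) + T*(1-S)*(a-b)*(w1-w2)) = 0"
      using core_identity[OF h1 h2, of T S] Cc0 unfolding Cc_def S_def T_def by simp
    hence G: "(a-w2)*(b-w1)*(T-S) + T*(1-S)*(a-b)*(w1-w2) = 0" using ab w1a w2b by simp
    define w where "w = sec w2 Q"
    note sw = sec_props[OF sa(2) QD, folded w_def]
    have "collinear {w2, w, Q}" using sw(4) by (simp add: insert_commute)
    hence "Q + w2*w*cnj Q = w2 + w" using chord_eq[OF sa(2) sw(2) sw(3)[symmetric]] by simp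
    hence "Q + w*w2*cnj Q = w + w2" by (simp add: algebra_simps)
    hence EQ: "(1 - T)*b*(a-w)*(a-w2) + T*a*(b-w)*(b-w2) = 0" using eqQ[of w w2] by simp
    have "T*(1-T)*(a-b) * ((1 - S)*b*(a-w)*(a-w1) + S*a*(b-w)*(b-w1)) = 0"
      using G_identity[of T b a w w2 w1 S] G EQ by algebra
    hence EP: "(1 - S)*b*(a-w)*(a-w1) + S*a*(b-w)*(b-w1) = 0" using T0 ab by simp
    hence "P + w*w1*cnj P - w - w1 = 0" using eqP[of w w1] a0 b0 by simp
    hence chP: "P + w*w1*cnj P = w + w1" by (simp add: algebra_simps)
    have ww1: "w1 \<noteq> w"
    proof
      assume "w1 = w"
      hence "P + w*w*cnj P = 2*w" using chP by simp
      thus False using no_tangent[OF sw(2) PD] by simp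
    qed
    have "collinear {w, w1, P}" using chord_eq[OF sw(2) sb(2) ww1[symmetric]] chP by simp
    hence cPw: "collinear {w, P, w1}" by (simp add: insert_commute)
    have wa: "w \<noteq> a"
    proof
      assume "w = a"
      hence "T * a * (b - a) * (b - w2) = 0" using EQ by simp
      thus False using T0 a0 ab w2b by auto
    qed
    have wb: "w \<noteq> b"
    proof
      assume "w = b"
      hence "(1 - T) * b * (a - b) * (a - w2) = 0" using EQ by simp
      thus False using T0 b0 ab sa(3) by auto
    qed
    have "collinear {a, w2, R}" using sa(4) by (simp add: insert_commute)
    moreover have "collinear {b, w1, R}" using sb(4) by (simp add: insert_commute)
    moreover have "collinear {w, Q, w2}" using sw(4) by (simp add: insert_commute)
    ultimately show "\<exists>w w1 w2. w \<in> Circle \<and> w \<noteq> v1 \<and> w \<noteq> v2 \<and>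
            w1 \<in> Circle \<and> w1 \<noteq> w \<and> collinear {w, P, w1} \<and>
            w2 \<in> Circle \<and> w2 \<noteq> w \<and> collinear {w, Q, w2} \<and>
            collinear {v1, w2, R} \<and> collinear {v2, w1, R}"
      using sw(2) wa wb sb(2) ww1 cPw sa(2) sw(3) unfolding Circle_def a_def b_def by blast
  qed
qed


end
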